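(* Suppose $(X,\tau)$ is a Choquet space, $B\subseteq\mathcal{P}(X)$ is a base for $\tau$ closed under finite intersections, and $B_{0}\subseteq B$. Then there exists $B_{1}$ with $B_{0}\subseteq B_{1}\subseteq B$, $|B_{1}|\leq|B_{0}|+\aleph_{0}$, such that $(X,\tau_{B_{1}})$ is Choquet, where $\tau_{B_{1}}$ is the topology generated by $B_{1}$.
   Context: The Choquet game on a space $X$: in round $n$ player A chooses a non-empty open $U_{n}\subseteq V_{n-1}$ (with $V_{-1}=X$) and player B chooses a non-empty open $V_{n}\subseteq U_{n}$; B wins if $\bigcap_{n}V_{n}\neq\emptyset$. $X$ is a Choquet space if B has a winning strategy. *)

theory Defs
  imports "HOL-Analysis.Analysis"
begin

definition is_base_for :: "'a topology \<Rightarrow> 'a set set \<Rightarrow> bool" where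
  "is_base_for T B \<longleftrightarrow> (\<forall>b\<in>B. openin T b) \<and>
     (\<forall>U. openin T U \<longrightarrow> (\<exists>C. C \<subseteq> B \<and> U = \<Union>C))"

text \<open>A strategy for player B in the Choquet game maps the list of player A's
moves so far [U_0, ..., U_n] to B's answer V_n (B's own earlier moves are
determined by the strategy).\<close>
definition choquet_answer :: "('a set list \<Rightarrow> 'a set) \<Rightarrow> (nat \<Rightarrow> 'a set) \<Rightarrow> nat \<Rightarrow> 'a set" where
  "choquet_answer \<sigma> U n = \<sigma> (map U [0..<Suc n])"

definition choquet_legal_upto :: "'a topology \<Rightarrow> ('a set list \<Rightarrow> 'a set) \<Rightarrow> (nat \<Rightarrow> 'a set) \<Rightarrow> nat \<Rightarrow> bool" where
  "choquet_legal_upto T \<sigma> U n \<longleftrightarrow>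
     (\<forall>k\<le>n. openin T (U k) \<and> U k \<noteq> {} \<and>
        (0 < k \<longrightarrow> U k \<subseteq> choquet_answer \<sigma> U (k - 1)))"

definition choquet_winning_strategy_B :: "'a topology \<Rightarrow> ('a set list \<Rightarrow> 'a set) \<Rightarrow> bool" where
  "choquet_winning_strategy_B T \<sigma> \<longleftrightarrow>
     (\<forall>U n. choquet_legal_upto T \<sigma> U n \<longrightarrow>
        openin T (choquet_answer \<sigma> U n) \<and> choquet_answer \<sigma> U n \<noteq> {} \<and>
        choquet_answer \<sigma> U n \<subseteq> U n) \<and>
     (\<forall>U. (\<forall>n. choquet_legal_upto T \<sigma> U n) \<longrightarrow>
        (\<Inter>n. choquet_answer \<sigma> U n) \<noteq> {})"

definition choquet_space :: "'a topology \<Rightarrow> bool" where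
  "choquet_space T \<longleftrightarrow> (\<exists>\<sigma>. choquet_winning_strategy_B T \<sigma>)"

end

theory Submission
  imports Defs "HOL-Library.Equipollence"
begin

context includes cardinal_syntax begin

lemma lepoll_card: "A \<lesssim> B \<longleftrightarrow> |A| \<le>o |B|"
  unfolding lepoll_def card_of_ordLeq[symmetric] by blast

lemma card_times_inf: "\<not> finite K \<Longrightarrow> |A| \<le>o |K| \<Longrightarrow> |B| \<le>o |K| \<Longrightarrow> |A \<times> B| \<le>o |K|"
  by (rule card_of_Times_ordLeq_infinite_Field) (auto simp: Field_card_of card_of_Card_order card_of_card_order_on)

lemma card_un_inf: "\<not> finite K \<Longrightarrow> |A| \<le>o |K| \<Longrightarrow> |B| \<le>o |K| \<Longrightarrow> |A \<union> B| \<le>o |K|"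
  by (rule card_of_Un_ordLeq_infinite_Field) (auto simp: Field_card_of card_of_Card_order card_of_card_order_on)

lemma card_lists_inf:
  assumes K: "\<not> finite K" and A: "|A| \<le>o |K|" shows "|lists A| \<le>o |K|"
proof -
  define L where "L n = {xs. set xs \<subseteq> A \<and> length xs = n}" for n
  have "|L n| \<le>o |K|" for n
  proof (induction n)
    case 0
    have "L 0 = {[]}" by (auto simp: L_def)
    moreover have "K \<noteq> {}" using K by auto
    ultimately show ?case using card_of_singl_ordLeq by metis
  next
    case (Suc n)
    have "L (Suc n) \<subseteq> (\<lambda>(a,xs). a#xs) ` (A \<times> L n)"
      by (auto simp: L_def length_Suc_conv image_iff)
    hence "|L (Suc n)| \<le>o |(\<lambda>(a,xs). a#xs) ` (A \<times> L n)|" by (rule card_of_mono1)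
    also have "|(\<lambda>(a,xs). a#xs) ` (A \<times> L n)| \<le>o |A \<times> L n|" by (rule card_of_image)
    also have "|A \<times> L n| \<le>o |K|" by (rule card_times_inf[OF K A Suc])
    finally show ?case .
  qed
  moreover have "lists A = (\<Union>n\<in>UNIV. L n)" by (auto simp: L_def)
  ultimately show ?thesis
    using card_of_UNION_ordLeq_infinite[OF K] K infinite_iff_card_of_nat by metis
qed

lemma C_card:
  fixes B0 :: "'a set set" and g :: "'a set list \<Rightarrow> 'a set" and C :: "nat \<Rightarrow> 'a set set"
  assumes C0: "C 0 = B0"
    and CS: "\<And>k. C (Suc k) = C k \<union> (\<lambda>(a,b). a\<inter>b) ` (C k \<times> C k) \<union> g ` {ws \<in> lists (insert X (C k)). P ws}"
  shows "\<Union>(range C) \<lesssim> B0 <+> (UNIV::nat set)"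
proof -
  define K where "K = B0 <+> (UNIV::nat set)"
  have K: "\<not> finite K" unfolding K_def by (simp add: finite_Plus_iff)
  have Kne: "K \<noteq> {}" using K by auto
  have "|C k| \<le>o |K|" for k
  proof (induction k)
    case 0
    show ?case unfolding C0 K_def by (rule card_of_Plus1)
  next
    case (Suc k)
    have i: "|insert X (C k)| \<le>o |K|"
      using card_un_inf[OF K card_of_singl_ordLeq[OF Kne] Suc] by simp
    have a: "|(\<lambda>(a,b). a\<inter>b) ` (C k \<times> C k)| \<le>o |K|"
      using ordLeq_transitive[OF card_of_image card_times_inf[OF K Suc Suc]] .
    have "|{ws \<in> lists (insert X (C k)). P ws}| \<le>o |lists (insert X (C k))|"
      by (rule card_of_mono1) auto
    hence "|{ws \<in> lists (insert X (C k)). P ws}| \<le>o |K|"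
      using ordLeq_transitive card_lists_inf[OF K i] by blast
    hence b: "|g ` {ws \<in> lists (insert X (C k)). P ws}| \<le>o |K|"
      using ordLeq_transitive[OF card_of_image] by blast
    show ?case unfolding CS by (rule card_un_inf[OF K card_un_inf[OF K Suc a] b])
  qed
  hence "|\<Union>k\<in>UNIV. C k| \<le>o |K|"
    using card_of_UNION_ordLeq_infinite[OF K] K infinite_iff_card_of_nat by metis
  thus ?thesis unfolding lepoll_card K_def by simp
qed

end

lemma list_in_stage:
  fixes C :: "nat \<Rightarrow> 'a set"
  assumes mono: "\<And>i j. i \<le> j \<Longrightarrow> C i \<subseteq> C j"
  shows "set ws \<subseteq> insert X (\<Union>(range C)) \<Longrightarrow> \<exists>k. set ws \<subseteq> insert X (C k)"
proof (induction ws)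
  case Nil then show ?case by simp
next
  case (Cons w ws)
  then obtain k where k: "set ws \<subseteq> insert X (C k)" by auto
  obtain j where j: "w \<in> insert X (C j)" using Cons.prems by auto
  have "set (w#ws) \<subseteq> insert X (C (max k j))"
    using k j mono[OF max.cobounded1[of k j]] mono[OF max.cobounded2[of j k]] by auto
  then show ?case by blast
qed

lemma gen_basic:
  assumes sub: "\<forall>b\<in>B1. b \<subseteq> X" and int: "\<forall>a\<in>B1. \<forall>b\<in>B1. a \<inter> b \<in> B1"
  shows "generate_topology_on (insert X B1) U \<Longrightarrow> x \<in> U \<Longrightarrow> \<exists>W\<in>insert X B1. x \<in> W \<and> W \<subseteq> U"
proof (induction arbitrary: x rule: generate_topology_on.induct)
  case Empty then show ?case by simp
next
  case (Int a b)
  have xa: "x \<in> a" and xb: "x \<in> b" using Int.prems by auto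
  obtain Wa where Wa: "Wa \<in> insert X B1" "x \<in> Wa" "Wa \<subseteq> a"
    using Int.IH(1)[OF xa] by (elim bexE conjE)
  obtain Wb where Wb: "Wb \<in> insert X B1" "x \<in> Wb" "Wb \<subseteq> b"
    using Int.IH(2)[OF xb] by (elim bexE conjE)
  have "Wa \<inter> Wb \<in> insert X B1"
    using Wa(1) Wb(1) sub int by (auto simp: Int_absorb1 Int_absorb2)
  moreover have "x \<in> Wa \<inter> Wb \<and> Wa \<inter> Wb \<subseteq> a \<inter> b" using Wa(2,3) Wb(2,3) by auto
  ultimately show ?case by (rule bexI[rotated])
next
  case (UN K)
  obtain k where k: "k \<in> K" "x \<in> k" using UN.prems by (elim UnionE)
  obtain W where W: "W \<in> insert X B1" "x \<in> W" "W \<subseteq> k"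
    using UN.IH[OF k] by (elim bexE conjE)
  have "x \<in> W \<and> W \<subseteq> \<Union>K" using W k by auto
  with W(1) show ?case by (rule bexI[rotated])
next
  case (Basis s)
  have "x \<in> s \<and> s \<subseteq> s" using Basis.prems by simp
  with Basis.hyps show ?case by (rule bexI[rotated])
qed

theorem lemma2p7:
  fixes T :: "'a topology" and B B0 :: "'a set set"
  assumes "choquet_space T"
    and "is_base_for T B"
    and "\<forall>a\<in>B. \<forall>b\<in>B. a \<inter> b \<in> B"
    and "B0 \<subseteq> B"
  shows "\<exists>B1. B0 \<subseteq> B1 \<and> B1 \<subseteq> B \<and> B1 \<lesssim> B0 <+> (UNIV :: nat set) \<and>
           choquet_space (topology_generated_by (insert (topspace T) B1))"
proof -
  obtain \<sigma> where \<sigma>: "choquet_winning_strategy_B T \<sigma>"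
    using assms(1) unfolding choquet_space_def by blast
  define X where "X = topspace T"
  have Bopen: "\<And>b. b \<in> B \<Longrightarrow> openin T b" using assms(2) unfolding is_base_for_def by blast
  define cond where "cond ws \<longleftrightarrow> (\<exists>b\<in>B. b \<noteq> {} \<and> b \<subseteq> \<sigma> ws)" for ws
  define g where "g ws = (SOME b. b\<in>B \<and> b \<noteq> {} \<and> b \<subseteq> \<sigma> ws)" for ws
  have gprop: "g ws \<in> B \<and> g ws \<noteq> {} \<and> g ws \<subseteq> \<sigma> ws" if "cond ws" for ws
    using someI_ex[of "\<lambda>b. b\<in>B \<and> b \<noteq> {} \<and> b \<subseteq> \<sigma> ws"] that
    unfolding cond_def g_def by blast
  have condI: "cond ws" if "openin T (\<sigma> ws)" "\<sigma> ws \<noteq> {}" for ws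
  proof -
    have "\<exists>C. C \<subseteq> B \<and> \<sigma> ws = \<Union>C" using assms(2) that(1) unfolding is_base_for_def by simp
    then obtain D where D: "D \<subseteq> B" "\<sigma> ws = \<Union>D" by (elim exE conjE)
    have "\<exists>b\<in>D. b \<noteq> {}" using that(2) unfolding D(2) by (simp add: Union_empty_conv)
    then obtain b where b: "b \<in> D" "b \<noteq> {}" by (elim bexE)
    have "b \<in> B" using b(1) D(1) by (rule subsetD[rotated])
    moreover have "b \<subseteq> \<sigma> ws" unfolding D(2) using b(1) by (rule Union_upper)
    ultimately show ?thesis unfolding cond_def using b(2) by blast
  qed
  define C where "C = rec_nat B0 (\<lambda>_ D. D \<union> (\<lambda>(a,b). a\<inter>b) ` (D \<times> D) \<union> g ` {ws \<in> lists (insert X D). cond ws})"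
  have C0: "C 0 = B0" by (simp add: C_def)
  have CS: "\<And>k. C (Suc k) = C k \<union> (\<lambda>(a,b). a\<inter>b) ` (C k \<times> C k) \<union> g ` {ws \<in> lists (insert X (C k)). cond ws}"
    by (simp add: C_def)
  define B1 where "B1 = \<Union>(range C)"
  have CB: "C k \<subseteq> B" for k
  proof (induction k)
    case 0 then show ?case using C0 assms(4) by simp
  next
    case (Suc k)
    have "(\<lambda>(a,b). a\<inter>b) ` (C k \<times> C k) \<subseteq> B" using Suc assms(3) by auto
    moreover have "g ` {ws \<in> lists (insert X (C k)). cond ws} \<subseteq> B" using gprop by auto
    ultimately show ?case unfolding CS Un_subset_iff using Suc by (intro conjI)
  qed
  have mono: "C i \<subseteq> C j" if "i \<le> j" for i j
  proof -
    have "C k \<subseteq> C (Suc k)" for k unfolding CS by (rule Un_upper1[THEN subset_trans]) blast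
    then show ?thesis using lift_Suc_mono_le[of C, OF _ that] by blast
  qed
  have B1B: "B1 \<subseteq> B" using CB unfolding B1_def by blast
  have B0B1: "B0 \<subseteq> B1" using C0 unfolding B1_def by blast
  have card: "B1 \<lesssim> B0 <+> (UNIV :: nat set)"
    unfolding B1_def by (rule C_card[OF C0 CS])
  have int1: "\<forall>a\<in>B1. \<forall>b\<in>B1. a \<inter> b \<in> B1"
  proof (intro ballI)
    fix a b assume "a \<in> B1" "b \<in> B1"
    then obtain i j where "a \<in> C i" "b \<in> C j" unfolding B1_def by blast
    then have ab: "a \<in> C (max i j)" "b \<in> C (max i j)"
      using mono[OF max.cobounded1[of i j]] mono[OF max.cobounded2[of j i]] by (blast, blast)
    then have "(a, b) \<in> C (max i j) \<times> C (max i j)" by (rule SigmaI)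
    then have "(\<lambda>(a,b). a\<inter>b) (a, b) \<in> (\<lambda>(a,b). a\<inter>b) ` (C (max i j) \<times> C (max i j))" by (rule imageI)
    then have "a \<inter> b \<in> C (Suc (max i j))" unfolding CS by simp
    then show "a \<inter> b \<in> B1" unfolding B1_def by blast
  qed
  have gB1: "g ws \<in> B1" if "set ws \<subseteq> insert X B1" "cond ws" for ws
  proof -
    have "set ws \<subseteq> insert X (\<Union>(range C))" using that(1) unfolding B1_def .
    have "\<exists>k. set ws \<subseteq> insert X (C k)"
      by (rule list_in_stage[where C=C]) (erule mono, fact)
    then obtain k where "set ws \<subseteq> insert X (C k)" by (elim exE)
    then have "ws \<in> {ws \<in> lists (insert X (C k)). cond ws}" using that(2) by (simp add: lists_eq_set)
    then have "g ws \<in> g ` {ws \<in> lists (insert X (C k)). cond ws}" by (rule imageI)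
    then have "g ws \<in> C (Suc k)" unfolding CS by (rule UnI2)
    then show ?thesis unfolding B1_def by blast
  qed
  have sub1: "\<forall>b\<in>B1. b \<subseteq> X" using B1B Bopen openin_subset unfolding X_def by blast
  define S' where "S' = insert X B1"
  define T' where "T' = topology_generated_by S'"
  have S'T: "openin T W" if "W \<in> S'" for W
    using that B1B Bopen unfolding S'_def X_def by auto
  have S'T': "openin T' W" if "W \<in> S'" for W
    using that unfolding T'_def by (rule topology_generated_by_Basis)
  define pick where "pick V = (SOME W. W \<in> S' \<and> W \<noteq> {} \<and> W \<subseteq> V)" for V
  have pickprop: "pick V \<in> S' \<and> pick V \<noteq> {} \<and> pick V \<subseteq> V" if op: "openin T' V" and ne: "V \<noteq> {}" for V
  proof -
    obtain x where x: "x \<in> V" using ne by blast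
    have "generate_topology_on S' V" using op unfolding T'_def by (rule openin_topology_generated_by)
    then have "\<exists>W\<in>S'. x \<in> W \<and> W \<subseteq> V"
      using gen_basic[OF sub1 int1] x unfolding S'_def by blast
    then obtain W where "W \<in> S'" "x \<in> W" "W \<subseteq> V" by blast
    then have "\<exists>W. W \<in> S' \<and> W \<noteq> {} \<and> W \<subseteq> V" by blast
    then show ?thesis unfolding pick_def by (rule someI_ex)
  qed
  define \<sigma>' where "\<sigma>' us = g (map pick us)" for us
  have \<sigma>1: "openin T (choquet_answer \<sigma> V m) \<and> choquet_answer \<sigma> V m \<noteq> {} \<and> choquet_answer \<sigma> V m \<subseteq> V m"
    if "choquet_legal_upto T \<sigma> V m" for V m
    using \<sigma> that unfolding choquet_winning_strategy_B_def by blast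
  have \<sigma>2: "(\<Inter>m. choquet_answer \<sigma> V m) \<noteq> {}" if "\<forall>m. choquet_legal_upto T \<sigma> V m" for V
    using \<sigma> that unfolding choquet_winning_strategy_B_def by blast
  have win: "choquet_winning_strategy_B T' \<sigma>'"
  proof -
    have main: "choquet_legal_upto T \<sigma> (\<lambda>k. pick (U k)) n \<and>
        (\<forall>k\<le>n. pick (U k) \<in> S' \<and> pick (U k) \<noteq> {} \<and> pick (U k) \<subseteq> U k)"
      if leg: "choquet_legal_upto T' \<sigma>' U n" for U n
    proof -
      define W where "W k = pick (U k)" for k
      have ans': "choquet_answer \<sigma>' U m = g (map W [0..<Suc m])" for m
        unfolding choquet_answer_def \<sigma>'_def W_def by (simp add: comp_def)
      have ansW: "choquet_answer \<sigma> W m = \<sigma> (map W [0..<Suc m])" for m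
        unfolding choquet_answer_def by simp
      have LU: "openin T' (U k) \<and> U k \<noteq> {} \<and> (0 < k \<longrightarrow> U k \<subseteq> choquet_answer \<sigma>' U (k - 1))"
        if "k \<le> n" for k
        using leg that unfolding choquet_legal_upto_def by blast
      have Wp: "W k \<in> S' \<and> W k \<noteq> {} \<and> W k \<subseteq> U k" if "k \<le> n" for k
      proof -
        have "openin T' (U k)" "U k \<noteq> {}" using LU[OF that] by auto
        then show ?thesis unfolding W_def by (rule pickprop)
      qed
      have WT: "openin T (W k)" if "k \<le> n" for k using Wp[OF that] S'T by blast
      have "m \<le> n \<Longrightarrow> choquet_legal_upto T \<sigma> W m" for m
      proof (induction m)
        case 0
        show ?case unfolding choquet_legal_upto_def
        proof (intro allI impI)
          fix k :: nat assume "k \<le> 0"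
          then have "k = 0" by simp
          then show "openin T (W k) \<and> W k \<noteq> {} \<and> (0 < k \<longrightarrow> W k \<subseteq> choquet_answer \<sigma> W (k - 1))"
            using Wp[of 0] WT[of 0] by simp
        qed
      next
        case (Suc m)
        then have IH: "choquet_legal_upto T \<sigma> W m" by simp
        have "openin T (choquet_answer \<sigma> W m) \<and> choquet_answer \<sigma> W m \<noteq> {}"
          using \<sigma>1[OF IH] by blast
        then have c: "cond (map W [0..<Suc m])" using condI ansW by simp
        have "W (Suc m) \<subseteq> U (Suc m)" using Wp[OF Suc.prems] by blast
        also have "\<dots> \<subseteq> choquet_answer \<sigma>' U m"
          using LU[OF Suc.prems] by simp
        also have "\<dots> \<subseteq> choquet_answer \<sigma> W m" using gprop[OF c] ans' ansW by simp
        finally have sub: "W (Suc m) \<subseteq> choquet_answer \<sigma> W m" .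
        show ?case unfolding choquet_legal_upto_def
        proof (intro allI impI)
          fix k :: nat assume k: "k \<le> Suc m"
          show "openin T (W k) \<and> W k \<noteq> {} \<and> (0 < k \<longrightarrow> W k \<subseteq> choquet_answer \<sigma> W (k - 1))"
          proof (cases "k = Suc m")
            case True
            then show ?thesis using sub Wp[OF Suc.prems] WT[OF Suc.prems] by simp
          next
            case False
            then have "k \<le> m" using k by simp
            then show ?thesis using IH unfolding choquet_legal_upto_def by blast
          qed
        qed
      qed
      then show ?thesis using Wp unfolding W_def by blast
    qed
    show ?thesis unfolding choquet_winning_strategy_B_def
    proof (intro conjI allI impI)
      fix U n assume L: "choquet_legal_upto T' \<sigma>' U n"
      define W where "W k = pick (U k)" for k
      have LW: "choquet_legal_upto T \<sigma> W n" and Wp: "\<forall>k\<le>n. W k \<in> S' \<and> W k \<noteq> {} \<and> W k \<subseteq> U k"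
        using main[OF L] unfolding W_def by auto
      have ans': "choquet_answer \<sigma>' U n = g (map W [0..<Suc n])"
        unfolding choquet_answer_def \<sigma>'_def W_def by (simp add: comp_def)
      have ansW: "choquet_answer \<sigma> W n = \<sigma> (map W [0..<Suc n])"
        unfolding choquet_answer_def by simp
      have s: "openin T (choquet_answer \<sigma> W n) \<and> choquet_answer \<sigma> W n \<noteq> {} \<and> choquet_answer \<sigma> W n \<subseteq> W n"
        using \<sigma> LW unfolding choquet_winning_strategy_B_def by blast
      then have c: "cond (map W [0..<Suc n])" using condI ansW by simp
      have "set (map W [0..<Suc n]) \<subseteq> insert X B1"
      proof
        fix w assume "w \<in> set (map W [0..<Suc n])"
        then obtain k where k: "k \<in> set [0..<Suc n]" "w = W k" by (simp only: set_map) blast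
        then have "k \<le> n" "w = W k" by auto
        then show "w \<in> insert X B1" using Wp unfolding S'_def by blast
      qed
      then have "g (map W [0..<Suc n]) \<in> S'" using gB1 c unfolding S'_def by blast
      then show "openin T' (choquet_answer \<sigma>' U n)" using ans' S'T' by simp
      show "choquet_answer \<sigma>' U n \<noteq> {}" using ans' gprop[OF c] by simp
      have "W n \<subseteq> U n" using Wp by blast
      moreover have "choquet_answer \<sigma>' U n \<subseteq> choquet_answer \<sigma> W n"
        unfolding ans' ansW using gprop[OF c] by blast
      ultimately show "choquet_answer \<sigma>' U n \<subseteq> U n" using s by blast
    next
      fix U assume L: "\<forall>n. choquet_legal_upto T' \<sigma>' U n"
      define W where "W k = pick (U k)" for k
      have LW: "\<forall>n. choquet_legal_upto T \<sigma> W n"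
        using main L unfolding W_def by blast
      then obtain x where x: "x \<in> (\<Inter>n. choquet_answer \<sigma> W n)"
        using \<sigma> unfolding choquet_winning_strategy_B_def by blast
      have "x \<in> choquet_answer \<sigma>' U n" for n
      proof -
        have "x \<in> choquet_answer \<sigma> W (Suc n)" using x by blast
        also have "\<dots> \<subseteq> W (Suc n)" using \<sigma> LW unfolding choquet_winning_strategy_B_def by blast
        also have "\<dots> \<subseteq> U (Suc n)" using main[OF L[rule_format, of "Suc n"]] unfolding W_def by blast
        also have "\<dots> \<subseteq> choquet_answer \<sigma>' U n"
        proof -
          have "\<forall>k\<le>Suc n. openin T' (U k) \<and> U k \<noteq> {} \<and> (0 < k \<longrightarrow> U k \<subseteq> choquet_answer \<sigma>' U (k - 1))"
            using L[rule_format, of "Suc n"] unfolding choquet_legal_upto_def .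
          then have "0 < Suc n \<longrightarrow> U (Suc n) \<subseteq> choquet_answer \<sigma>' U (Suc n - 1)" by blast
          then show ?thesis by simp
        qed
        finally show ?thesis .
      qed
      then show "(\<Inter>n. choquet_answer \<sigma>' U n) \<noteq> {}" by blast
    qed
  qed
  have "choquet_space (topology_generated_by (insert (topspace T) B1))"
    using win unfolding choquet_space_def T'_def S'_def X_def by (rule exI[where x=\<sigma>'])
  with B0B1 B1B card show ?thesis by (intro exI[of _ B1] conjI)
qed

end
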